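(* Fix $s,s'\in S$ with $s\ne s_\star$, $j\in\{1,\dots,J\}$, and $a\in Act(s)$ with interface function $I_{s,a}\equiv\bar u_j$. Let $\mathbf{D}_N=\{(x_i,u_i,x_i^+)\}_{i=1}^N$ be a dataset with $x_i^+=f(x_i,u_i,\eta(\omega_i))$, where the noise outcomes $\omega_i$ are i.i.d. samples from $\mathbb{P}$ (and unobserved). Let $\mathbf{D}_N(\mathcal{T}^{-1}(s),\bar U_j)=\{(x,u,x^+)\in\mathbf{D}_N: x\in\mathcal{T}^{-1}(s),\ u\in\bar U_j\}=\{(x_i,u_i,x_i^+)\}_{i=1}^{M}$ (after relabelling), $M=|\mathbf{D}_N(\mathcal{T}^{-1}(s),\bar U_j)|$, and $F_i=\widehat F(x_i,u_i,x_i^+)$ for $i=1,\dots,M$. Define $$\check M=|\{i: F_i\subseteq\mathcal{T}^{-1}(s')\}|,\qquad \hat M=|\{i: F_i\cap\mathcal{T}^{-1}(s')\neq\emptyset\}|,$$ and, for $\beta\in(0,1)$, $\check P_{lb}=0$ if $\check M=0$ and otherwise the solution of $\frac{\beta}{2}=\sum_{\ell=\check M}^{M}\binom{M}{\ell}\check P_{lb}^{\ell}(1-\check P_{lb})^{M-\ell}$; $\hat P_{ub}=1$ if $\hat M=M$ and otherwise the solution of $\frac{\beta}{2}=\sum_{\ell=0}^{\hat M}\binom{M}{\ell}\hat P_{ub}^{\ell}(1-\hat P_{ub})^{M-\ell}$. Then, with probability at least $1-\beta$ over the noise samples, $$\check P_{lb}\le\check p(s,a,s')\quad\text{and}\quad\hat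 p(s,a,s')\le\hat P_{ub}.$$
   Context: System: $x_{k+1}=f(x_k,u_k,\eta_k)$ with $\mathcal{X}\subset\mathbb{R}^n$ compact, $\mathcal{U}\subseteq\mathbb{R}^m$, noise $\eta:\Omega\to\mathcal{W}$ on $(\Omega,\mathcal{F},\mathbb{P})$, $f:\mathcal{X}\times\mathcal{U}\times\mathcal{W}\to\mathcal{X}$ unknown but Lipschitz: there are known $L_X,L_U>0$ with $\|f(x_1,u_1,\eta(\omega))-f(x_2,u_2,\eta(\omega))\|\le L_X\|x_1-x_2\|+L_U\|u_1-u_2\|$ for all $x_1,x_2\in\mathcal{X}$, $u_1,u_2\in\mathcal{U}$, $\omega\in\Omega$. $\mathcal{X}$ is partitioned into disjoint convex polytopes $R_1,\dots,R_v$, $R_\star=\mathbb{R}^n\setminus\mathcal{X}$, abstract states $S=\{s_1,\dots,s_v,s_\star\}$, $\mathcal{T}(x)=s_i\iff x\in R_i$, $\mathcal{T}^{-1}(s)$ the region of $s$. $\mathcal{U}$ is partitioned into disjoint $\bar U_1,\dots,\bar U_J$ with representatives $\bar u_j\in\bar U_j$. For $a\in Act(s)$ the interface function is $I_{s,a}:\mathcal{T}^{-1}(s)\to\{\bar u_1,\dots,\bar u_J\}$. For compact $X'$: $\psi(x,X',a)=\mathbb{P}\{\omega: f(x,I_{\mathcal{T}(x),a}(x),\eta(\omega))\in X'\}$, $\check p(s,a,s')=\min_{x\in\mathcal{T}^{-1}(s)}\psi(x,\mathcal{T}^{-1}(s'),a)$, $\hat p(s,a,s')=\max_{x\in\mathcal{T}^{-1}(s)}\psi(x,\mathcal{T}^{-1}(s'),a)$.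 For a sample $(x,u,x^+)$ with $x\in\mathcal{T}^{-1}(s)$, $u\in\bar U_j$: $\widehat F(x,u,x^+)=\{\tilde x\in\mathcal{X}: \|\tilde x-x^+\|\le L_U\|u-\bar u_j\|+L_X\max_{\hat x\in\mathcal{T}^{-1}(s)}\|x-\hat x\|\}$. *)

theory Defs
  imports "HOL-Probability.Probability"
begin

definition binom_upper_tail :: "nat \<Rightarrow> nat \<Rightarrow> real \<Rightarrow> real" where
  "binom_upper_tail M k p = (\<Sum>l=k..M. real (M choose l) * p ^ l * (1 - p) ^ (M - l))"

definition binom_lower_tail :: "nat \<Rightarrow> nat \<Rightarrow> real \<Rightarrow> real" where
  "binom_lower_tail M k p = (\<Sum>l=0..k. real (M choose l) * p ^ l * (1 - p) ^ (M - l))"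

definition P_lb :: "real \<Rightarrow> nat \<Rightarrow> nat \<Rightarrow> real" where
  "P_lb \<beta> M Mc = (if Mc = 0 then 0
     else (THE p. 0 \<le> p \<and> p \<le> 1 \<and> \<beta> / 2 = binom_upper_tail M Mc p))"

definition P_ub :: "real \<Rightarrow> nat \<Rightarrow> nat \<Rightarrow> real" where
  "P_ub \<beta> M Mh = (if Mh = M then 1
     else (THE p. 0 \<le> p \<and> p \<le> 1 \<and> \<beta> / 2 = binom_lower_tail M Mh p))"

text \<open>Region of an abstract state: None is the absorbing state s_star (complement of X),
  Some i is s_i with region R i.\<close>
definition region :: "(nat \<Rightarrow> 'x set) \<Rightarrow> 'x set \<Rightarrow> nat option \<Rightarrow> 'x set" where
  "region R X s = (case s of None \<Rightarrow> UNIV - X | Some i \<Rightarrow> R i)"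

text \<open>The set Fhat(x,u,x+) for a sample with x in region Rs and u in the input cell with
  representative ubar.\<close>
definition Fhat :: "real \<Rightarrow> real \<Rightarrow> ('x::real_normed_vector) set \<Rightarrow> 'x set \<Rightarrow>
    ('u::real_normed_vector) \<Rightarrow> 'x \<Rightarrow> 'u \<Rightarrow> 'x \<Rightarrow> 'x set" where
  "Fhat LX LU X Rs ubar x u xp =
     {xt \<in> X. norm (xt - xp) \<le> LU * norm (u - ubar) + LX * (SUP xh\<in>Rs. norm (x - xh))}"

definition psi :: "'a measure \<Rightarrow> ('x \<Rightarrow> 'u \<Rightarrow> 'w \<Rightarrow> 'x) \<Rightarrow> ('a \<Rightarrow> 'w) \<Rightarrow> ('x \<Rightarrow> 'u) \<Rightarrow>
    'x \<Rightarrow> 'x set \<Rightarrow> real" where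
  "psi P f eta I x X' = measure P {\<omega> \<in> space P. f x (I x) (eta \<omega>) \<in> X'}"

definition p_check :: "'a measure \<Rightarrow> ('x \<Rightarrow> 'u \<Rightarrow> 'w \<Rightarrow> 'x) \<Rightarrow> ('a \<Rightarrow> 'w) \<Rightarrow> ('x \<Rightarrow> 'u) \<Rightarrow>
    'x set \<Rightarrow> 'x set \<Rightarrow> real" where
  "p_check P f eta I Rs Rs' = (INF x\<in>Rs. psi P f eta I x Rs')"

definition p_hat :: "'a measure \<Rightarrow> ('x \<Rightarrow> 'u \<Rightarrow> 'w \<Rightarrow> 'x) \<Rightarrow> ('a \<Rightarrow> 'w) \<Rightarrow> ('x \<Rightarrow> 'u) \<Rightarrow>
    'x set \<Rightarrow> 'x set \<Rightarrow> real" where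
  "p_hat P f eta I Rs Rs' = (SUP x\<in>Rs. psi P f eta I x Rs')"

end

theory Submission imports Defs begin

lemma upper_tail_0: "1 \<le> k \<Longrightarrow> binom_upper_tail M k 0 = 0"
  unfolding binom_upper_tail_def by (intro sum.neutral) auto

lemma upper_tail_1: "k \<le> M \<Longrightarrow> binom_upper_tail M k 1 = 1"
proof -
  assume "k \<le> M"
  have "binom_upper_tail M k 1 = (\<Sum>l\<in>{M}. real (M choose l) * 1 ^ l * (1 - 1) ^ (M - l))"
    unfolding binom_upper_tail_def using \<open>k \<le> M\<close>
    by (intro sum.mono_neutral_right) auto
  then show ?thesis by simp
qed

lemma upper_tail_deriv:
  fixes m k0 :: nat
  assumes "k0 \<le> m"
  shows "((\<lambda>p. binom_upper_tail (Suc m) (Suc k0) p) has_real_derivative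
           real (Suc m) * (real (m choose k0) * p ^ k0 * (1 - p) ^ (m - k0))) (at p)"
proof -
  define G where "G = (\<lambda>l. real (m choose l) * p ^ l * (1 - p) ^ (m - l))"
  have eq: "binom_upper_tail (Suc m) (Suc k0) = (\<lambda>p. \<Sum>l=k0..m. real (Suc m choose Suc l) * p ^ Suc l * (1 - p) ^ (m - l))"
    unfolding binom_upper_tail_def
    by (rule ext, subst sum.shift_bounds_cl_Suc_ivl) simp
  have d: "((\<lambda>p. real (Suc m choose Suc l) * p ^ Suc l * (1 - p) ^ (m - l)) has_real_derivative
             real (Suc m) * (G l - G (Suc l))) (at p)" if "l \<le> m" for l
  proof -
    define c where "c = real (Suc m choose Suc l)"
    have d1: "((\<lambda>p. p ^ Suc l) has_real_derivative real (Suc l) * p ^ l) (at p)"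
      using DERIV_pow[where n="Suc l" and x=p and s=UNIV] by simp
    have d2: "((\<lambda>p. (1 - p) ^ (m - l)) has_real_derivative real (m - l) * ((0 - 1) * (1 - p) ^ (m - l - 1))) (at p)"
      using DERIV_power[OF DERIV_diff[OF DERIV_const[of 1] DERIV_ident], where n="m - l" and x=p and s=UNIV] by simp
    have "((\<lambda>p. c * p ^ Suc l * (1 - p) ^ (m - l)) has_real_derivative
       c * p ^ Suc l * (real (m - l) * ((0 - 1) * (1 - p) ^ (m - l - 1))) + c * (real (Suc l) * p ^ l) * (1 - p) ^ (m - l)) (at p)"
      by (rule DERIV_mult'[OF DERIV_cmult[OF d1] d2])
    moreover have "c * p ^ Suc l * (real (m - l) * ((0 - 1) * (1 - p) ^ (m - l - 1))) + c * (real (Suc l) * p ^ l) * (1 - p) ^ (m - l)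
        = real (Suc m) * (G l - G (Suc l))"
    proof -
      have a: "real (Suc l) * c = real (Suc m) * real (m choose l)"
        unfolding c_def using Suc_times_binomial[of l m] by (metis of_nat_mult)
      have b: "real (m - l) * c = real (Suc m) * real (m choose Suc l)"
        unfolding c_def using binomial_absorb_comp[of "Suc m" "Suc l"] by (metis diff_Suc_1 diff_Suc_Suc of_nat_mult)
      have "c * p ^ Suc l * (real (m - l) * ((0 - 1) * (1 - p) ^ (m - l - 1))) + c * (real (Suc l) * p ^ l) * (1 - p) ^ (m - l)
         = (real (Suc l) * c) * p ^ l * (1 - p) ^ (m - l) - (real (m - l) * c) * p ^ Suc l * (1 - p) ^ (m - l - 1)"
        by (simp add: algebra_simps)
      also have "\<dots> = (real (Suc m) * real (m choose l)) * p ^ l * (1 - p) ^ (m - l) - (real (Suc m) * real (m choose Suc l)) * p ^ Suc l * (1 - p) ^ (m - l - 1)"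
        by (simp only: a b)
      also have "\<dots> = real (Suc m) * (G l - G (Suc l))"
        unfolding G_def by (simp add: algebra_simps)
      finally show ?thesis .
    qed
    ultimately show ?thesis unfolding c_def by simp
  qed
  have "((\<lambda>p. \<Sum>l=k0..m. real (Suc m choose Suc l) * p ^ Suc l * (1 - p) ^ (m - l)) has_real_derivative
          (\<Sum>l=k0..m. real (Suc m) * (G l - G (Suc l)))) (at p)"
    by (rule DERIV_sum) (use d in auto)
  moreover have "(\<Sum>l=k0..m. real (Suc m) * (G l - G (Suc l))) = real (Suc m) * G k0"
  proof -
    have "(\<Sum>l=k0..m. (G l - G (Suc l))) = - (\<Sum>l=k0..m. (G (Suc l) - G l))"
      by (simp add: sum_negf[symmetric])
    also have "\<dots> = G k0 - G (Suc m)" using assms by (subst sum_Suc_diff) auto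
    also have "G (Suc m) = 0" by (simp add: G_def)
    finally show ?thesis by (simp add: sum_distrib_left[symmetric])
  qed
  ultimately show ?thesis unfolding eq G_def by simp
qed

lemma upper_tail_cont: "continuous_on S (binom_upper_tail M k)"
  unfolding binom_upper_tail_def by (intro continuous_intros)

lemma upper_tail_strict:
  assumes "1 \<le> k" "k \<le> M" "0 \<le> a" "a < b" "b \<le> 1"
  shows "binom_upper_tail M k a < binom_upper_tail M k b"
proof -
  obtain m k0 where M: "M = Suc m" and k: "k = Suc k0" and km: "k0 \<le> m"
    using assms by (cases M; cases k) auto
  show ?thesis unfolding M k
  proof (rule DERIV_pos_imp_increasing_open[OF \<open>a < b\<close>])
    fix x :: real assume x: "a < x" "x < b"
    then have "0 < x" "x < 1" using assms by auto
    then have "real (Suc m) * (real (m choose k0) * x ^ k0 * (1 - x) ^ (m - k0)) > 0"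
      using km by (intro mult_pos_pos) (auto simp: zero_less_binomial)
    then show "\<exists>y. (binom_upper_tail (Suc m) (Suc k0) has_real_derivative y) (at x) \<and> 0 < y"
      using upper_tail_deriv[OF km] by blast
  qed (rule upper_tail_cont)
qed

lemma upper_tail_mono:
  assumes "1 \<le> k" "k \<le> M" "0 \<le> a" "a \<le> b" "b \<le> 1"
  shows "binom_upper_tail M k a \<le> binom_upper_tail M k b"
  using upper_tail_strict[OF assms(1,2,3) _ assms(5)] assms(4) by (cases "a = b") auto

lemma upper_tail_ex1:
  assumes "1 \<le> k" "k \<le> M" "0 < c" "c < 1"
  shows "\<exists>!p. 0 \<le> p \<and> p \<le> 1 \<and> c = binom_upper_tail M k p"
proof -
  have "\<exists>p\<ge>0. p \<le> 1 \<and> binom_upper_tail M k p = c"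
    apply (rule IVT)
    using assms upper_tail_0[of k M] upper_tail_1[of k M] upper_tail_cont[of UNIV M k]
    by (auto simp: continuous_on_eq_continuous_at)
  then obtain p where p: "0 \<le> p" "p \<le> 1" "c = binom_upper_tail M k p" by auto
  show ?thesis
  proof (rule ex1I[of _ p])
    fix q assume q: "0 \<le> q \<and> q \<le> 1 \<and> c = binom_upper_tail M k q"
    show "q = p"
    proof (rule ccontr)
      assume "q \<noteq> p"
      then consider "q < p" | "p < q" by linarith
      then show False
        using upper_tail_strict[OF assms(1,2)] p q by cases (metis less_irrefl)+
    qed
  qed (use p in auto)
qed

lemma tails_sum:
  assumes "k < M"
  shows "binom_lower_tail M k p = 1 - binom_upper_tail M (Suc k) p"
proof -
  have "1 = (p + (1 - p)) ^ M" by simp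
  also have "\<dots> = (\<Sum>l=0..M. real (M choose l) * p ^ l * (1 - p) ^ (M - l))"
    by (subst binomial_ring) (simp add: atLeast0AtMost mult.assoc)
  also have "\<dots> = binom_lower_tail M k p + binom_upper_tail M (Suc k) p"
  proof -
    have "{0..M} = {0..k} \<union> {Suc k..M}" using assms by auto
    then show ?thesis by (simp add: sum.union_disjoint binom_lower_tail_def binom_upper_tail_def)
  qed
  finally show ?thesis by simp
qed

lemma lower_tail_strict:
  assumes "k < M" "0 \<le> a" "a < b" "b \<le> 1"
  shows "binom_lower_tail M k b < binom_lower_tail M k a"
  using upper_tail_strict[of "Suc k" M a b] assms by (simp add: tails_sum)

lemma P_lb_char:
  assumes "1 \<le> k" "k \<le> M" "0 < \<beta>" "\<beta> < 1"
  shows "0 \<le> P_lb \<beta> M k \<and> P_lb \<beta> M k \<le> 1 \<and> \<beta> / 2 = binom_upper_tail M k (P_lb \<beta> M k)"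
proof -
  have "\<exists>!p. 0 \<le> p \<and> p \<le> 1 \<and> \<beta> / 2 = binom_upper_tail M k p"
    using assms by (intro upper_tail_ex1) auto
  from theI'[OF this] show ?thesis using assms unfolding P_lb_def by auto
qed

lemma P_ub_char:
  assumes "k < M" "0 < \<beta>" "\<beta> < 1"
  shows "0 \<le> P_ub \<beta> M k \<and> P_ub \<beta> M k \<le> 1 \<and> \<beta> / 2 = binom_lower_tail M k (P_ub \<beta> M k)"
proof -
  have "\<exists>!p. 0 \<le> p \<and> p \<le> 1 \<and> 1 - \<beta> / 2 = binom_upper_tail M (Suc k) p"
    using assms by (intro upper_tail_ex1) auto
  then have "\<exists>!p. 0 \<le> p \<and> p \<le> 1 \<and> \<beta> / 2 = binom_lower_tail M k p"
    using assms by (simp add: tails_sum algebra_simps)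
  from theI'[OF this] show ?thesis using assms unfolding P_ub_def by auto
qed

lemma binom_prob:
  assumes "p \<in> {0..1}"
  shows "measure_pmf.prob (binomial_pmf M p) S = (\<Sum>l\<in>S \<inter> {..M}. real (M choose l) * p ^ l * (1 - p) ^ (M - l))"
proof -
  have "measure_pmf.prob (binomial_pmf M p) S = measure_pmf.prob (binomial_pmf M p) (S \<inter> {..M} \<inter> set_pmf (binomial_pmf M p))"
    using assms set_pmf_binomial_eq[of p M]
    by (subst measure_Int_set_pmf[symmetric]) (auto intro!: arg_cong[where f="measure _"])
  also have "\<dots> = measure_pmf.prob (binomial_pmf M p) (S \<inter> {..M})"
    by (rule measure_Int_set_pmf)
  also have "\<dots> = (\<Sum>l\<in>S \<inter> {..M}. pmf (binomial_pmf M p) l)"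
    by (rule measure_measure_pmf_finite) auto
  finally show ?thesis using assms by simp
qed

lemma binom_prob_ge:
  assumes "p \<in> {0..1}"
  shows "measure_pmf.prob (binomial_pmf M p) {c. k \<le> c} = binom_upper_tail M k p"
  unfolding binom_prob[OF assms] binom_upper_tail_def
  by (rule sum.cong) auto

lemma binom_prob_le:
  assumes "p \<in> {0..1}" "k \<le> M"
  shows "measure_pmf.prob (binomial_pmf M p) {c. c \<le> k} = binom_lower_tail (M::nat) k p"
  unfolding binom_prob[OF assms(1)] binom_lower_tail_def
  using assms(2) by (intro sum.cong) auto
lemma count_prob:
  assumes P: "prob_space P" and E: "E \<in> sets P" and fin: "finite I" and DI: "D \<subseteq> I"
  shows "{\<omega> \<in> space (PiM I (\<lambda>_. P)). K (card {i\<in>D. \<omega> i \<in> E})} \<in> sets (PiM I (\<lambda>_. P)) \<and>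
         measure (PiM I (\<lambda>_. P)) {\<omega> \<in> space (PiM I (\<lambda>_. P)). K (card {i\<in>D. \<omega> i \<in> E})}
         = measure_pmf.prob (binomial_pmf (card D) (measure P E)) {c. K c}"
proof -
  interpret P: prob_space P by fact
  interpret Q: product_prob_space "\<lambda>_. P" I by unfold_locales
  define p where "p = measure P E"
  have p01: "p \<in> {0..1}" unfolding p_def by auto
  have finD: "finite D" using fin DI finite_subset by auto
  define Pi where "Pi = Pi_pmf D False (\<lambda>_. bernoulli_pmf p)"
  have bin: "binomial_pmf (card D) p = map_pmf (\<lambda>f. card {x\<in>D. f x}) Pi"
    unfolding Pi_def using binomial_pmf_altdef'[OF finD refl p01] .
  define F where "F = PiE_dflt D False (\<lambda>_. UNIV :: bool set)"
  have finF: "finite F" unfolding F_def using finD by auto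
  have setPi: "set_pmf Pi \<subseteq> F"
    unfolding Pi_def F_def using set_Pi_pmf_subset'[OF finD, of False "\<lambda>_. bernoulli_pmf p"] by (force simp: PiE_dflt_def)
  define S where "S = {b\<in>F. K (card {x\<in>D. b x})}"
  have finS: "finite S" using finF unfolding S_def by auto
  have "measure_pmf.prob (binomial_pmf (card D) p) {c. K c} = measure_pmf.prob Pi {f. K (card {x\<in>D. f x})}"
    unfolding bin by simp
  also have "\<dots> = measure_pmf.prob Pi ({f. K (card {x\<in>D. f x})} \<inter> set_pmf Pi)"
    by (rule measure_Int_set_pmf[symmetric])
  also have "{f. K (card {x\<in>D. f x})} \<inter> set_pmf Pi = S \<inter> set_pmf Pi"
    using setPi unfolding S_def by auto
  also have "measure_pmf.prob Pi (S \<inter> set_pmf Pi) = measure_pmf.prob Pi S"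
    by (rule measure_Int_set_pmf)
  also have "\<dots> = (\<Sum>b\<in>S. pmf Pi b)"
    by (rule measure_measure_pmf_finite[OF finS])
  also have "\<dots> = (\<Sum>b\<in>S. \<Prod>i\<in>D. if b i then p else 1 - p)"
  proof (rule sum.cong[OF refl])
    fix b assume "b \<in> S"
    then have "\<forall>x. x \<notin> D \<longrightarrow> b x = False" unfolding S_def F_def PiE_dflt_def by auto
    then show "pmf Pi b = (\<Prod>i\<in>D. if b i then p else 1 - p)"
      unfolding Pi_def using p01 by (auto simp: pmf_Pi[OF finD] intro!: prod.cong)
  qed
  finally have R: "measure_pmf.prob (binomial_pmf (card D) p) {c. K c} = (\<Sum>b\<in>S. \<Prod>i\<in>D. if b i then p else 1 - p)" .
  define C where "C b = {\<omega> \<in> space (PiM I (\<lambda>_. P)). \<forall>i\<in>D. (\<omega> i \<in> E) = b i}" for b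
  have Ceq: "C b = prod_emb I (\<lambda>_. P) D (PiE D (\<lambda>i. if b i then E else space P - E))" for b
    unfolding C_def prod_emb_def using DI sets.sets_into_space[OF E]
    by (auto simp: space_PiM PiE_iff extensional_def split: if_splits) blast
  have mC: "measure (PiM I (\<lambda>_. P)) (C b) = (\<Prod>i\<in>D. if b i then p else 1 - p)" for b
    unfolding Ceq
    by (subst Q.measure_PiM_emb[OF DI finD]) (auto simp: E p_def P.prob_compl intro!: prod.cong)
  have setC: "C b \<in> sets (PiM I (\<lambda>_. P))" for b
    unfolding Ceq using DI finD E by (intro sets_PiM_I_finite sets_PiM_I) auto
  have "{\<omega> \<in> space (PiM I (\<lambda>_. P)). K (card {i\<in>D. \<omega> i \<in> E})} = (\<Union>b\<in>S. C b)"
  proof safe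
    fix \<omega> assume \<omega>: "\<omega> \<in> space (PiM I (\<lambda>_. P))" "K (card {i\<in>D. \<omega> i \<in> E})"
    define b where "b = (\<lambda>i. if i \<in> D then \<omega> i \<in> E else False)"
    have "{x\<in>D. b x} = {i\<in>D. \<omega> i \<in> E}" unfolding b_def by auto
    then have "b \<in> S" unfolding S_def F_def PiE_dflt_def using \<omega>(2)
      by (simp add: b_def)
    moreover have "\<omega> \<in> C b" unfolding C_def b_def using \<omega>(1) by auto
    ultimately show "\<omega> \<in> (\<Union>b\<in>S. C b)" by auto
  next
    fix \<omega> b assume "b \<in> S" "\<omega> \<in> C b"
    then show "\<omega> \<in> space (PiM I (\<lambda>_. P))" unfolding C_def by auto
    have "{i\<in>D. \<omega> i \<in> E} = {x\<in>D. b x}" using \<open>\<omega> \<in> C b\<close> unfolding C_def by auto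
    then show "K (card {i\<in>D. \<omega> i \<in> E})" using \<open>b \<in> S\<close> unfolding S_def by auto
  qed
  moreover have "measure (PiM I (\<lambda>_. P)) (\<Union>b\<in>S. C b) = (\<Sum>b\<in>S. measure (PiM I (\<lambda>_. P)) (C b))"
  proof (rule Q.finite_measure_finite_Union[OF finS])
    show "C ` S \<subseteq> sets (PiM I (\<lambda>_. P))" using setC by auto
    show "disjoint_family_on C S"
      unfolding disjoint_family_on_def
    proof (intro ballI impI)
      fix b b' assume bb: "b \<in> S" "b' \<in> S" "b \<noteq> b'"
      then obtain i where "b i \<noteq> b' i" by auto
      moreover have "i \<in> D" using bb \<open>b i \<noteq> b' i\<close> unfolding S_def F_def PiE_dflt_def by auto
      ultimately show "C b \<inter> C b' = {}" unfolding C_def by auto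
    qed
  qed
  moreover have "(\<Union>b\<in>S. C b) \<in> sets (PiM I (\<lambda>_. P))"
    using setC finS by auto
  ultimately show ?thesis using R mC p_def by simp
qed
theorem corollary1:
  fixes f :: "real^'n \<Rightarrow> real^'m \<Rightarrow> 'w \<Rightarrow> real^'n"
    and X :: "(real^'n) set" and U :: "(real^'m) set"
    and P :: "'a measure" and eta :: "'a \<Rightarrow> 'w"
    and LX LU :: real
    and v :: nat and R :: "nat \<Rightarrow> (real^'n) set"
    and J :: nat and Ubar :: "nat \<Rightarrow> (real^'m) set" and ubar :: "nat \<Rightarrow> real^'m"
    and s :: nat and s' :: "nat option" and j :: nat
    and I :: "real^'n \<Rightarrow> real^'m"
    and N :: nat and xs :: "nat \<Rightarrow> real^'n" and us :: "nat \<Rightarrow> real^'m"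
    and \<beta> :: real
  assumes "prob_space P"
    and "compact X"
    and "\<forall>x\<in>X. \<forall>u\<in>U. \<forall>\<omega>\<in>space P. f x u (eta \<omega>) \<in> X"
    and "\<forall>x\<in>X. \<forall>u\<in>U. (\<lambda>\<omega>. f x u (eta \<omega>)) \<in> borel_measurable P"
    and "LX > 0" and "LU > 0"
    and "\<forall>x1\<in>X. \<forall>x2\<in>X. \<forall>u1\<in>U. \<forall>u2\<in>U. \<forall>\<omega>\<in>space P.
           norm (f x1 u1 (eta \<omega>) - f x2 u2 (eta \<omega>)) \<le> LX * norm (x1 - x2) + LU * norm (u1 - u2)"
    and "\<forall>i\<in>{1..v}. R i \<noteq> {} \<and> convex (R i) \<and> polytope (closure (R i)) \<and> R i \<in> sets borel"
    and "\<forall>i\<in>{1..v}. \<forall>k\<in>{1..v}. i \<noteq> k \<longrightarrow> R i \<inter> R k = {}"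
    and "(\<Union>i\<in>{1..v}. R i) = X"
    and "\<forall>i\<in>{1..J}. ubar i \<in> Ubar i"
    and "\<forall>i\<in>{1..J}. \<forall>k\<in>{1..J}. i \<noteq> k \<longrightarrow> Ubar i \<inter> Ubar k = {}"
    and "(\<Union>i\<in>{1..J}. Ubar i) = U"
    and "s \<in> {1..v}"
    and "s' = None \<or> (\<exists>k\<in>{1..v}. s' = Some k)"
    and "j \<in> {1..J}"
    and "\<forall>x\<in>R s. I x = ubar j"
    and "\<forall>i<N. xs i \<in> X \<and> us i \<in> U"
    and "0 < \<beta>" and "\<beta> < 1"
  shows "\<exists>A\<in>sets (PiM {..<N} (\<lambda>_. P)).
           measure (PiM {..<N} (\<lambda>_. P)) A \<ge> 1 - \<beta> \<and>
           (\<forall>\<omega>\<in>A.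
              let D = {i. i < N \<and> xs i \<in> R s \<and> us i \<in> Ubar j};
                  F = (\<lambda>i. Fhat LX LU X (R s) (ubar j) (xs i) (us i)
                               (f (xs i) (us i) (eta (\<omega> i))));
                  M = card D;
                  Mc = card {i\<in>D. F i \<subseteq> region R X s'};
                  Mh = card {i\<in>D. F i \<inter> region R X s' \<noteq> {}}
              in P_lb \<beta> M Mc \<le> p_check P f eta I (R s) (region R X s') \<and>
                 p_hat P f eta I (R s) (region R X s') \<le> P_ub \<beta> M Mh)"
proof -
  interpret P: prob_space P by fact
  interpret Q: product_prob_space "\<lambda>_. P" "{..<N}" by unfold_locales
  let ?Q = "PiM {..<N} (\<lambda>_. P)"
  have Qsp: "prob_space ?Q" by (rule prob_space_PiM) (use assms(1) in auto)
  have Q1: "measure ?Q (space ?Q) = 1" using prob_space.prob_space[OF Qsp] .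
  define D where "D = {i. i < N \<and> xs i \<in> R s \<and> us i \<in> Ubar j}"
  define M where "M = card D"
  define Reg where "Reg = region R X s'"
  define Fi where "Fi \<omega> i = Fhat LX LU X (R s) (ubar j) (xs i) (us i) (f (xs i) (us i) (eta (\<omega> i)))" for \<omega> i
  define Mc where "Mc \<omega> = card {i\<in>D. Fi \<omega> i \<subseteq> Reg}" for \<omega>
  define Mh where "Mh \<omega> = card {i\<in>D. Fi \<omega> i \<inter> Reg \<noteq> {}}" for \<omega>
  define Ex where "Ex x = {w \<in> space P. f x (ubar j) (eta w) \<in> Reg}" for x
  define B where "B x \<omega> = card {i\<in>D. \<omega> i \<in> Ex x}" for x \<omega>
  define pc where "pc = p_check P f eta I (R s) Reg"
  define ph where "ph = p_hat P f eta I (R s) Reg"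
  define ps where "ps x = psi P f eta I x Reg" for x
  have RsX: "R s \<subseteq> X" using assms(10,14) by auto
  have Rs_ne: "R s \<noteq> {}" using assms(8,14) by auto
  have ubU: "ubar j \<in> U" using assms(11,13,16) by auto
  have Reg_borel: "Reg \<in> sets borel"
  proof -
    have "closed X" using assms(2) compact_imp_closed by auto
    then show ?thesis unfolding Reg_def region_def using assms(8,15)
      by (auto simp: Compl_eq_Diff_UNIV[symmetric] split: option.splits)
  qed
  have Ex_sets: "Ex x \<in> sets P" if "x \<in> R s" for x
  proof -
    have "(\<lambda>w. f x (ubar j) (eta w)) \<in> borel_measurable P"
      using assms(4) RsX ubU that by auto
    from measurable_sets[OF this Reg_borel] show ?thesis unfolding Ex_def by (simp add: vimage_def Int_def conj_commute)
  qed
  have ps_eq: "ps x = measure P (Ex x)" if "x \<in> R s" for x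
    unfolding ps_def psi_def Ex_def using assms(17) that by simp
  have ps01: "0 \<le> ps x \<and> ps x \<le> 1" if "x \<in> R s" for x
    using ps_eq[OF that] by auto
  have bddb: "bdd_below (ps ` R s)" using ps01 by (intro bdd_belowI2[where m=0]) auto
  have bdda: "bdd_above (ps ` R s)" using ps01 by (intro bdd_aboveI2[where M=1]) auto
  have pc_eq: "pc = (INF x\<in>R s. ps x)" unfolding pc_def p_check_def ps_def ..
  have ph_eq: "ph = (SUP x\<in>R s. ps x)" unfolding ph_def p_hat_def ps_def ..
  have pc0: "0 \<le> pc" unfolding pc_eq using Rs_ne ps01 by (intro cINF_greatest) auto
  have ph1: "ph \<le> 1" unfolding ph_eq using Rs_ne ps01 by (intro cSUP_least) auto
  have DN: "D \<subseteq> {..<N}" unfolding D_def by auto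
  have finD: "finite D" using DN finite_subset by blast
  have bddRs: "bounded (R s)" using RsX compact_imp_bounded[OF assms(2)] bounded_subset by blast
  then obtain Bd where Bd: "\<forall>z\<in>R s. norm z \<le> Bd" unfolding bounded_iff by auto
  have key: "f x (ubar j) (eta (\<omega> i)) \<in> Fi \<omega> i"
    if \<omega>: "\<omega> \<in> space ?Q" and x: "x \<in> R s" and i: "i \<in> D" for \<omega> x i
  proof -
    have wi: "\<omega> i \<in> space P" using \<omega> i unfolding D_def by (auto simp: space_PiM PiE_iff)
    have xi: "xs i \<in> X" "us i \<in> U" using i assms(18) unfolding D_def by auto
    have xX: "x \<in> X" using x RsX by auto
    have inX: "f x (ubar j) (eta (\<omega> i)) \<in> X" using assms(3) xX ubU wi by auto
    have lip: "norm (f x (ubar j) (eta (\<omega> i)) - f (xs i) (us i) (eta (\<omega> i)))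
        \<le> LX * norm (x - xs i) + LU * norm (ubar j - us i)"
      using assms(7) xX ubU xi wi by blast
    have bdd: "bdd_above ((\<lambda>xh. norm (xs i - xh)) ` R s)"
    proof (rule bdd_aboveI2[where M="norm (xs i) + Bd"])
      fix xh assume "xh \<in> R s"
      then show "norm (xs i - xh) \<le> norm (xs i) + Bd"
        using Bd norm_triangle_ineq4[of "xs i" xh] by force
    qed
    have "norm (x - xs i) \<le> (SUP xh\<in>R s. norm (xs i - xh))"
      using cSUP_upper[OF x bdd] by (simp add: norm_minus_commute)
    then have "LX * norm (x - xs i) \<le> LX * (SUP xh\<in>R s. norm (xs i - xh))"
      using assms(5) by (intro mult_left_mono) auto
    then have "norm (f x (ubar j) (eta (\<omega> i)) - f (xs i) (us i) (eta (\<omega> i)))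
        \<le> LU * norm (us i - ubar j) + LX * (SUP xh\<in>R s. norm (xs i - xh))"
      using lip by (simp add: norm_minus_commute)
    then show ?thesis unfolding Fi_def Fhat_def using inX by auto
  qed
  have K1: "Mc \<omega> \<le> B x \<omega>" if \<omega>: "\<omega> \<in> space ?Q" and x: "x \<in> R s" for \<omega> x
    unfolding Mc_def B_def
  proof (rule card_mono)
    show "finite {i \<in> D. \<omega> i \<in> Ex x}" using finD by auto
    show "{i \<in> D. Fi \<omega> i \<subseteq> Reg} \<subseteq> {i \<in> D. \<omega> i \<in> Ex x}"
    proof safe
      fix i assume i: "i \<in> D" "Fi \<omega> i \<subseteq> Reg"
      have wi: "\<omega> i \<in> space P" using \<omega> i unfolding D_def by (auto simp: space_PiM PiE_iff)
      then show "\<omega> i \<in> Ex x" unfolding Ex_def using key[OF \<omega> x i(1)] i(2) by auto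
    qed
  qed
  have K2: "B x \<omega> \<le> Mh \<omega>" if \<omega>: "\<omega> \<in> space ?Q" and x: "x \<in> R s" for \<omega> x
    unfolding Mh_def B_def
  proof (rule card_mono)
    show "finite {i \<in> D. Fi \<omega> i \<inter> Reg \<noteq> {}}" using finD by auto
    show "{i \<in> D. \<omega> i \<in> Ex x} \<subseteq> {i \<in> D. Fi \<omega> i \<inter> Reg \<noteq> {}}"
    proof safe
      fix i assume i: "i \<in> D" "\<omega> i \<in> Ex x" "Fi \<omega> i \<inter> Reg = {}"
      then show False unfolding Ex_def using key[OF \<omega> x i(1)] by auto
    qed
  qed
  have McM: "Mc \<omega> \<le> M" for \<omega> unfolding Mc_def M_def using finD by (intro card_mono) auto
  have MhM: "Mh \<omega> \<le> M" for \<omega> unfolding Mh_def M_def using finD by (intro card_mono) auto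
  have Bprob: "{\<omega> \<in> space ?Q. Kp (B x \<omega>)} \<in> sets ?Q \<and>
      measure ?Q {\<omega> \<in> space ?Q. Kp (B x \<omega>)} = measure_pmf.prob (binomial_pmf M (ps x)) {c. Kp c}"
    if x: "x \<in> R s" for x Kp
    unfolding B_def M_def ps_eq[OF x]
    by (rule count_prob[OF assms(1) Ex_sets[OF x] _ DN]) simp
  have lower: "\<exists>A1\<in>sets ?Q. measure ?Q A1 \<ge> 1 - \<beta> / 2 \<and> (\<forall>\<omega>\<in>A1. P_lb \<beta> M (Mc \<omega>) \<le> pc)"
  proof (cases "\<exists>k\<le>M. pc < P_lb \<beta> M k")
    case False
    then show ?thesis using McM assms(19) by (intro bexI[of _ "space ?Q"]) (auto simp: not_less Q1)
  next
    case True
    define T where "T = {k. k \<le> M \<and> pc < P_lb \<beta> M k}"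
    define k where "k = Min T"
    have finT: "finite T" "T \<noteq> {}" unfolding T_def using True by auto
    have kT: "k \<in> T" unfolding k_def using finT by (rule Min_in)
    have k1: "1 \<le> k" using kT pc0 unfolding T_def by (cases k) (auto simp: P_lb_def)
    have kM: "k \<le> M" using kT unfolding T_def by auto
    define q where "q = P_lb \<beta> M k"
    have q: "0 \<le> q" "q \<le> 1" "\<beta> / 2 = binom_upper_tail M k q"
      using P_lb_char[OF k1 kM assms(19,20)] unfolding q_def by auto
    have "(INF x\<in>R s. ps x) < q" using kT unfolding T_def q_def pc_eq by auto
    then obtain x where x: "x \<in> R s" "ps x < q"
      using cINF_less_iff[OF Rs_ne bddb] by auto
    define A1 where "A1 = {\<omega> \<in> space ?Q. B x \<omega> < k}"
    have "A1 \<in> sets ?Q" unfolding A1_def using Bprob[OF x(1), of "\<lambda>c. c < k"] by simp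
    moreover have "measure ?Q A1 \<ge> 1 - \<beta> / 2"
    proof -
      have "measure ?Q A1 = measure_pmf.prob (binomial_pmf M (ps x)) {c. c < k}"
        unfolding A1_def using Bprob[OF x(1), of "\<lambda>c. c < k"] by simp
      also have "{c. c < k} = UNIV - {c. k \<le> c}" by auto
      also have "measure_pmf.prob (binomial_pmf M (ps x)) (UNIV - {c. k \<le> c}) = 1 - binom_upper_tail M k (ps x)"
        using measure_pmf.prob_compl[of "{c. k \<le> c}" "binomial_pmf M (ps x)"] binom_prob_ge[of "ps x" M k] ps01[OF x(1)]
        by simp
      finally have eqm: "measure ?Q A1 = 1 - binom_upper_tail M k (ps x)" .
      have "binom_upper_tail M k (ps x) < binom_upper_tail M k q"
        using upper_tail_strict[OF k1 kM _ x(2) q(2)] ps01[OF x(1)] by auto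
      then show ?thesis using q(3) eqm by linarith
    qed
    moreover have "P_lb \<beta> M (Mc \<omega>) \<le> pc" if "\<omega> \<in> A1" for \<omega>
    proof (rule ccontr)
      assume "\<not> P_lb \<beta> M (Mc \<omega>) \<le> pc"
      then have "Mc \<omega> \<in> T" unfolding T_def using McM by auto
      then have "k \<le> Mc \<omega>" unfolding k_def using finT by auto
      moreover have "Mc \<omega> \<le> B x \<omega>" using that x(1) K1 unfolding A1_def by auto
      ultimately show False using that unfolding A1_def by auto
    qed
    ultimately show ?thesis by blast
  qed
  have upper: "\<exists>A2\<in>sets ?Q. measure ?Q A2 \<ge> 1 - \<beta> / 2 \<and> (\<forall>\<omega>\<in>A2. ph \<le> P_ub \<beta> M (Mh \<omega>))"
  proof (cases "\<exists>k\<le>M. P_ub \<beta> M k < ph")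
    case False
    then show ?thesis using MhM assms(19) by (intro bexI[of _ "space ?Q"]) (auto simp: not_less Q1)
  next
    case True
    define T where "T = {k. k \<le> M \<and> P_ub \<beta> M k < ph}"
    define k where "k = Max T"
    have finT: "finite T" "T \<noteq> {}" unfolding T_def using True by auto
    have kT: "k \<in> T" unfolding k_def using finT by (rule Max_in)
    have kM: "k < M" using kT ph1 unfolding T_def by (cases "k = M") (auto simp: P_ub_def)
    define q where "q = P_ub \<beta> M k"
    have q: "0 \<le> q" "q \<le> 1" "\<beta> / 2 = binom_lower_tail M k q"
      using P_ub_char[OF kM assms(19,20)] unfolding q_def by auto
    have "q < (SUP x\<in>R s. ps x)" using kT unfolding T_def q_def ph_eq by auto
    then obtain x where x: "x \<in> R s" "q < ps x"
      using less_cSUP_iff[OF Rs_ne bdda] by auto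
    define A2 where "A2 = {\<omega> \<in> space ?Q. k < B x \<omega>}"
    have "A2 \<in> sets ?Q" unfolding A2_def using Bprob[OF x(1), of "\<lambda>c. k < c"] by simp
    moreover have "measure ?Q A2 \<ge> 1 - \<beta> / 2"
    proof -
      have "measure ?Q A2 = measure_pmf.prob (binomial_pmf M (ps x)) {c. k < c}"
        unfolding A2_def using Bprob[OF x(1), of "\<lambda>c. k < c"] by simp
      also have "{c. k < c} = UNIV - {c. c \<le> k}" by auto
      also have "measure_pmf.prob (binomial_pmf M (ps x)) (UNIV - {c. c \<le> k}) = 1 - binom_lower_tail M k (ps x)"
        using measure_pmf.prob_compl[of "{c. c \<le> k}" "binomial_pmf M (ps x)"] binom_prob_le[of "ps x" k M] ps01[OF x(1)] kM
        by simp
      finally have eqm: "measure ?Q A2 = 1 - binom_lower_tail M k (ps x)" .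
      have "binom_lower_tail M k (ps x) < binom_lower_tail M k q"
        using lower_tail_strict[OF kM q(1) x(2)] ps01[OF x(1)] by auto
      then show ?thesis using q(3) eqm by linarith
    qed
    moreover have "ph \<le> P_ub \<beta> M (Mh \<omega>)" if "\<omega> \<in> A2" for \<omega>
    proof (rule ccontr)
      assume "\<not> ph \<le> P_ub \<beta> M (Mh \<omega>)"
      then have "Mh \<omega> \<in> T" unfolding T_def using MhM by auto
      then have "Mh \<omega> \<le> k" unfolding k_def using finT by auto
      moreover have "B x \<omega> \<le> Mh \<omega>" using that x(1) K2 unfolding A2_def by auto
      ultimately show False using that unfolding A2_def by auto
    qed
    ultimately show ?thesis by blast
  qed
  obtain A1 where A1: "A1 \<in> sets ?Q" "measure ?Q A1 \<ge> 1 - \<beta> / 2" "\<forall>\<omega>\<in>A1. P_lb \<beta> M (Mc \<omega>) \<le> pc"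
    using lower by blast
  obtain A2 where A2: "A2 \<in> sets ?Q" "measure ?Q A2 \<ge> 1 - \<beta> / 2" "\<forall>\<omega>\<in>A2. ph \<le> P_ub \<beta> M (Mh \<omega>)"
    using upper by blast
  have "measure ?Q (A1 \<union> A2) = measure ?Q A1 + measure ?Q A2 - measure ?Q (A1 \<inter> A2)"
    using A1(1) A2(1) by (intro measure_Un3) (auto simp: finite_measure.fmeasurable_eq_sets[OF prob_space.finite_measure[OF Qsp]])
  moreover have "measure ?Q (A1 \<union> A2) \<le> 1" by (rule prob_space.prob_le_1[OF Qsp])
  ultimately have mA: "measure ?Q (A1 \<inter> A2) \<ge> 1 - \<beta>" using A1(2) A2(2) by linarith
  show ?thesis
  proof (rule bexI[of _ "A1 \<inter> A2"])
    show "A1 \<inter> A2 \<in> sets ?Q" using A1(1) A2(1) by auto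
    show "measure ?Q (A1 \<inter> A2) \<ge> 1 - \<beta> \<and> (\<forall>\<omega>\<in>A1 \<inter> A2.
              let D = {i. i < N \<and> xs i \<in> R s \<and> us i \<in> Ubar j};
                  F = (\<lambda>i. Fhat LX LU X (R s) (ubar j) (xs i) (us i)
                               (f (xs i) (us i) (eta (\<omega> i))));
                  M = card D;
                  Mc = card {i\<in>D. F i \<subseteq> region R X s'};
                  Mh = card {i\<in>D. F i \<inter> region R X s' \<noteq> {}}
              in P_lb \<beta> M Mc \<le> p_check P f eta I (R s) (region R X s') \<and>
                 p_hat P f eta I (R s) (region R X s') \<le> P_ub \<beta> M Mh)"
      using mA A1(3) A2(3) unfolding Let_def Mc_def Mh_def Fi_def D_def M_def pc_def ph_def Reg_def
      by auto
  qed
qed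
end
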